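(* Let $p=(p_1,\dots,p_n)$ be a probability distribution, $m\ge 2$, $\delta>0$, $\eta>0$, and $\varphi_j=2^{-j}$ for $j\ge 0$. For $j=1,\dots,m$ let $\beta_j,\beta_j':[0,1]\to\mathbb{R}$ satisfy, for all $x\in[0,1]$: $\beta_j(x)^2+\beta_j'(x)^2=1$; $\beta_j(x)^2\le\delta^2$ whenever $0\le x\le\varphi_j$; and $\beta_j(x)^2\ge 1-\delta^2$ whenever $2\varphi_j\le x\le 1$. Let $B_j'(x)=\prod_{i=1}^j\beta_i'(x)$ ($B_0'\equiv1$) and $B_j(x)=B_{j-1}'(x)\beta_j(x)$. For $k=1,\dots,m$ let $S_k$ be a real even polynomial with $|S_k(x)|\le 1$ for all $x\in[-1,1]$ and $$\left|S_k(x)-\frac{\sqrt{\log(2/x)}}{2\sqrt{\log(1/\varphi_{k+1})}}\right|\le\eta\quad\text{for all }x\in[\varphi_k,1].$$ Define $v_k=\sum_{i=1}^n p_i S_k(\sqrt{p_i})^2B_k(\sqrt{p_i})^2\log\frac{1}{\varphi_{k+1}}$ and $v=-2+\sum_{k=1}^m 8v_k$. Then $$|v-H(p)|=\tilde{\mathcal{O}}\!\left(m\delta^2+\eta+\frac{n}{2^m}\right),$$ where $H(p)=-\sum_i p_i\log p_i$.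
   Context: All logarithms are base 2. $\tilde{\mathcal{O}}$ hides constant and polylogarithmic factors. *)

theory Defs
  imports "HOL-Analysis.Analysis" "HOL-Computational_Algebra.Polynomial"
begin

definition phi :: "nat \<Rightarrow> real" where
  "phi j = (1/2) ^ j"

definition Bprime :: "(nat \<Rightarrow> real \<Rightarrow> real) \<Rightarrow> nat \<Rightarrow> real \<Rightarrow> real" where
  "Bprime beta' j x = (\<Prod>i=1..j. beta' i x)"

definition Bfun :: "(nat \<Rightarrow> real \<Rightarrow> real) \<Rightarrow> (nat \<Rightarrow> real \<Rightarrow> real) \<Rightarrow> nat \<Rightarrow> real \<Rightarrow> real" where
  "Bfun beta beta' j x = Bprime beta' (j - 1) x * beta j x"

definition even_poly :: "real poly \<Rightarrow> bool" where
  "even_poly P \<longleftrightarrow> (\<forall>i. odd i \<longrightarrow> coeff P i = 0)"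

definition entropy :: "nat \<Rightarrow> (nat \<Rightarrow> real) \<Rightarrow> real" where
  "entropy n p = - (\<Sum>i=1..n. p i * log 2 (p i))"

definition vk :: "nat \<Rightarrow> (nat \<Rightarrow> real) \<Rightarrow> (nat \<Rightarrow> real poly) \<Rightarrow> (nat \<Rightarrow> real \<Rightarrow> real)
                   \<Rightarrow> (nat \<Rightarrow> real \<Rightarrow> real) \<Rightarrow> nat \<Rightarrow> real" where
  "vk n p S beta beta' k =
     (\<Sum>i=1..n. p i * (poly (S k) (sqrt (p i)))\<^sup>2 * (Bfun beta beta' k (sqrt (p i)))\<^sup>2
                 * log 2 (1 / phi (k+1)))"

definition vest :: "nat \<Rightarrow> nat \<Rightarrow> (nat \<Rightarrow> real) \<Rightarrow> (nat \<Rightarrow> real poly) \<Rightarrow> (nat \<Rightarrow> real \<Rightarrow> real)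
                   \<Rightarrow> (nat \<Rightarrow> real \<Rightarrow> real) \<Rightarrow> real" where
  "vest n m p S beta beta' = -2 + (\<Sum>k=1..m. 8 * vk n p S beta beta' k)"

end

theory Submission
  imports Defs
begin

lemma ln2_ge_half: "ln (2::real) \<ge> 1/2"
proof -
  have "ln (1/2::real) \<le> 1/2 - 1" by (rule ln_le_minus_one) simp
  moreover have "ln (1/2::real) = - ln 2" by (simp add: ln_div)
  ultimately show ?thesis by simp
qed

lemma ylogy: assumes "0 < y" "y \<le> (1::real)" shows "y * (- log 2 y) \<le> 2"
proof -
  have "ln (1/y) \<le> 1/y - 1" using assms by (intro ln_le_minus_one) simp
  hence "- ln y \<le> 1/y" using assms by (simp add: ln_div)
  hence h: "y * (- ln y) \<le> 1" using assms by (simp add: field_simps)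
  have "y * (- log 2 y) = (y * (- ln y)) / ln 2" by (simp add: log_def)
  also have "\<dots> \<le> 1 / ln 2" using h ln2_ge_half by (intro divide_right_mono) auto
  also have "\<dots> \<le> 2" using ln2_ge_half by (simp add: field_simps)
  finally show ?thesis .
qed

lemma phi_powr: "phi k = 2 powr (- real k)"
  by (simp add: phi_def powr_minus powr_realpow power_one_over inverse_eq_divide)

lemma L1: assumes "0 < x" "x < phi k" shows "real k < - log 2 x"
proof -
  have "log 2 x < log 2 (phi k)" using assms by (simp add: phi_def)
  thus ?thesis by (simp add: phi_powr)
qed

lemma L2: assumes "0 < x" "real k \<ge> - log 2 x + 1" shows "2 * phi k \<le> x"
proof -
  have e: "2 * phi k = 2 powr (1 - real k)" by (simp add: phi_powr powr_diff powr_minus divide_inverse)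
  have "log 2 (2 powr (1 - real k)) \<le> log 2 x" using assms by simp
  thus ?thesis unfolding e using assms by (subst (asm) log_le_cancel_iff) auto
qed

lemma L3: assumes "0 < x" "phi k \<le> x" shows "log 2 (2/x) \<le> real k + 1"
proof -
  have "log 2 (phi k) \<le> log 2 x" using assms by (simp add: phi_def)
  hence "- real k \<le> log 2 x" by (simp add: phi_powr)
  moreover have "log 2 (2/x) = 1 - log 2 x" using assms by (simp add: log_divide)
  ultimately show ?thesis by simp
qed

lemma log_phi: "log 2 (1 / phi (k+1)) = real k + 1"
proof -
  have "1 / phi (k+1) = 2 ^ (k+1)" by (simp add: phi_def power_one_over)
  moreover have "log 2 ((2::real) ^ (k+1)) = real (k+1)" by (subst log_nat_power) auto
  ultimately show ?thesis by simp
qed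



definition PP :: "(nat \<Rightarrow> real) \<Rightarrow> nat \<Rightarrow> real" where
  "PP a k = (\<Prod>j=1..k. 1 - a j)"
definition AA :: "(nat \<Rightarrow> real) \<Rightarrow> nat \<Rightarrow> real" where
  "AA a k = PP a (k-1) * a k"

lemma PP_0[simp]: "PP a 0 = 1" by (simp add: PP_def)
lemma PP_Suc: "PP a (Suc k) = PP a k * (1 - a (Suc k))"
  by (simp add: PP_def prod.cl_ivl_Suc)

lemma AA_Suc: "AA a (Suc k) = PP a k - PP a (Suc k)"
  by (simp add: AA_def PP_Suc algebra_simps)

lemma sum_AA: "(\<Sum>k=1..m. AA a k) = 1 - PP a m"
proof (induction m)
  case 0 then show ?case by simp
next
  case (Suc m) then show ?case by (simp add: sum.cl_ivl_Suc AA_Suc)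
qed

lemma abel: "(\<Sum>k=1..m. (real k + 1) * AA a k) + (real m + 1) * PP a m = PP a 0 + (\<Sum>k<m. PP a k)"
proof (induction m)
  case 0 then show ?case by simp
next
  case (Suc m)
  have "(\<Sum>k=1..Suc m. (real k + 1) * AA a k) + (real (Suc m) + 1) * PP a (Suc m)
      = ((\<Sum>k=1..m. (real k + 1) * AA a k) + (real m + 1) * PP a m) + PP a m"
    by (simp add: sum.cl_ivl_Suc AA_Suc algebra_simps)
  also have "\<dots> = PP a 0 + (\<Sum>k<Suc m. PP a k)" using Suc by simp
  finally show ?case .
qed

lemma PP_bounds: assumes "\<forall>j\<in>{1..m}. 0 \<le> a j \<and> a j \<le> 1" "k \<le> m"
  shows "0 \<le> PP a k \<and> PP a k \<le> 1"
  unfolding PP_def using assms by (auto intro!: prod_nonneg prod_le_1)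

lemma AA_bounds: assumes "\<forall>j\<in>{1..m}. 0 \<le> a j \<and> a j \<le> 1" "1 \<le> k" "k \<le> m"
  shows "0 \<le> AA a k \<and> AA a k \<le> a k"
proof -
  have "0 \<le> PP a (k-1) \<and> PP a (k-1) \<le> 1" using PP_bounds[OF assms(1)] assms by auto
  moreover have "0 \<le> a k" "a k \<le> 1" using assms by auto
  ultimately show ?thesis unfolding AA_def by (auto intro: mult_left_le_one_le)
qed

lemma count_le: assumes "0 \<le> t" "0 \<le> c"
  shows "(\<Sum>k=1..m. if real k < t then c else (0::real)) \<le> c * t"
proof -
  have "(\<Sum>k=1..m. if real k < t then c else (0::real)) = (\<Sum>k\<in>{1..m} \<inter> {k. real k < t}. c)"
    by (simp add: sum.If_cases)
  also have "\<dots> = c * real (card ({1..m} \<inter> {k. real k < t}))" by simp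
  also have "card ({1..m} \<inter> {k. real k < t}) \<le> card {1..nat \<lfloor>t\<rfloor>}"
  proof (rule card_mono)
    show "{1..m} \<inter> {k. real k < t} \<subseteq> {1..nat \<lfloor>t\<rfloor>}"
    proof
      fix k assume "k \<in> {1..m} \<inter> {k. real k < t}"
      hence "1 \<le> k" "real k < t" by auto
      hence "int k \<le> \<lfloor>t\<rfloor>" by linarith
      thus "k \<in> {1..nat \<lfloor>t\<rfloor>}" using \<open>1 \<le> k\<close> by auto
    qed
  qed simp
  hence "real (card ({1..m} \<inter> {k. real k < t})) \<le> t" using assms(1) by simp linarith
  hence "c * real (card ({1..m} \<inter> {k. real k < t})) \<le> c * t" using assms(2) by (rule mult_left_mono)
  finally show ?thesis .
qed



lemma PP_rec: "1 \<le> k \<Longrightarrow> PP a k = PP a (k-1) * (1 - a k)"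
  using PP_Suc[of a "k-1"] by simp

lemma sum_kAA:
  fixes a :: "nat \<Rightarrow> real" and x \<delta> l :: real and m :: nat
  assumes x: "0 < x" and d: "\<delta>\<^sup>2 \<le> 1/2" and l: "l = - log 2 x" "0 \<le> l"
  and a01: "\<forall>j\<in>{1..m}. 0 \<le> a j \<and> a j \<le> 1"
  and ahigh: "\<forall>j\<in>{1..m}. 2*phi j \<le> x \<longrightarrow> a j \<ge> 1 - \<delta>\<^sup>2"
  shows "(\<Sum>k=1..m. (real k + 1) * AA a k) \<le> l + 4"
proof -
  have P: "0 \<le> PP a k \<and> PP a k \<le> 1" if "k \<le> m" for k using PP_bounds[OF a01 that] .
  have pk: "PP a k \<le> (if real k < l + 1 then 1 else 0) + AA a k" if k: "k \<in> {1..m}" for k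
  proof (cases "real k < l + 1")
    case True
    have "0 \<le> AA a k" using AA_bounds[OF a01] k by auto
    thus ?thesis using True P[of k] k by auto
  next
    case False
    hence "2 * phi k \<le> x" using L2[OF x, of k] l by linarith
    hence "a k \<ge> 1 - \<delta>\<^sup>2" using ahigh k by auto
    hence "1 - a k \<le> a k" using d by linarith
    moreover have "0 \<le> PP a (k-1)" using P[of "k-1"] k by auto
    ultimately have "PP a (k-1) * (1 - a k) \<le> PP a (k-1) * a k" by (rule mult_left_mono)
    thus ?thesis using False k by (simp add: PP_rec AA_def)
  qed
  have "(\<Sum>k=1..m. PP a k) \<le> (\<Sum>k=1..m. (if real k < l + 1 then 1 else 0) + AA a k)"
    by (rule sum_mono) (rule pk)
  also have "\<dots> = (\<Sum>k=1..m. if real k < l + 1 then 1 else (0::real)) + (1 - PP a m)"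
    unfolding sum.distrib sum_AA ..
  also have "\<dots> \<le> 1 * (l + 1) + 1"
    using count_le[where t="l+1" and c=1 and m=m] l P[of m] by auto
  finally have s1: "(\<Sum>k=1..m. PP a k) \<le> l + 2" by simp
  have "(\<Sum>k<m. PP a k) \<le> (\<Sum>k\<le>m. PP a k)"
    by (rule sum_mono2) (auto intro: P[THEN conjunct1])
  also have "\<dots> = PP a 0 + (\<Sum>k=1..m. PP a k)"
    by (simp add: atMost_atLeast0 sum.atLeast_Suc_atMost)
  finally have s2: "(\<Sum>k<m. PP a k) \<le> l + 3" using s1 by simp
  have "(\<Sum>k=1..m. (real k + 1) * AA a k) = PP a 0 + (\<Sum>k<m. PP a k) - (real m + 1) * PP a m"
    using abel[where m=m and a=a] by linarith
  also have "\<dots> \<le> 1 + (l + 3)"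
  proof -
    have "0 \<le> (real m + 1) * PP a m" using P[of m] by simp
    thus ?thesis using s2 by simp
  qed
  finally show ?thesis by simp
qed

lemma core:
  fixes a s :: "nat \<Rightarrow> real" and x \<delta> \<eta> l :: real and m :: nat
  assumes x: "0 < x" "x \<le> 1" and eta: "0 \<le> \<eta>" and d: "\<delta>\<^sup>2 \<le> 1/2" and l: "l = - log 2 x"
  and a01: "\<forall>j\<in>{1..m}. 0 \<le> a j \<and> a j \<le> 1"
  and alow: "\<forall>j\<in>{1..m}. x \<le> phi j \<longrightarrow> a j \<le> \<delta>\<^sup>2"
  and ahigh: "\<forall>j\<in>{1..m}. 2*phi j \<le> x \<longrightarrow> a j \<ge> 1 - \<delta>\<^sup>2"
  and s1: "\<forall>k\<in>{1..m}. \<bar>s k\<bar> \<le> 1"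
  and sapp: "\<forall>k\<in>{1..m}. phi k \<le> x \<longrightarrow> \<bar>s k - sqrt (log 2 (2/x)) / (2 * sqrt (real k + 1))\<bar> \<le> \<eta>"
  shows "\<bar>(\<Sum>k=1..m. AA a k * (8 * (real k + 1) * (s k)\<^sup>2)) - (2 + 2*l)\<bar>
           \<le> 10 * \<delta>\<^sup>2 * (l + 1) * l + 16 * \<eta> * (l + 4) + (2 + 2*l) * PP a m"
proof -
  define R where "R = 2 + 2*l"
  have l0: "0 \<le> l" using x l by simp
  have R0: "0 \<le> R" using l0 by (simp add: R_def)
  have P: "0 \<le> PP a k \<and> PP a k \<le> 1" if "k \<le> m" for k using PP_bounds[OF a01 that] .
  have trm: "\<bar>AA a k * (8 * (real k + 1) * (s k)\<^sup>2 - R)\<bar>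
      \<le> (if real k < l then 10 * \<delta>\<^sup>2 * (l + 1) else 0) + 16 * \<eta> * ((real k + 1) * AA a k)"
    if k: "k \<in> {1..m}" for k
  proof -
    have A: "0 \<le> AA a k" "AA a k \<le> a k" using AA_bounds[OF a01] k by auto
    have sk: "\<bar>s k\<bar> \<le> 1" using s1 k by auto
    have ext: "0 \<le> 16 * \<eta> * ((real k + 1) * AA a k)" using A eta by simp
    show ?thesis
    proof (cases "x < phi k")
      case True
      have kl: "real k < l" using L1[OF x(1) True] l by simp
      have "a k \<le> \<delta>\<^sup>2" using alow k True by auto
      hence Ad: "AA a k \<le> \<delta>\<^sup>2" using A by simp
      have "(s k)\<^sup>2 \<le> 1" using sk by (simp add: abs_square_le_1)
      hence "8 * (real k + 1) * (s k)\<^sup>2 \<le> 8 * (real k + 1)" by (simp add: mult_left_le)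
      moreover have "0 \<le> 8 * (real k + 1) * (s k)\<^sup>2" by simp
      moreover have "\<forall>Q. Q \<le> 8 * (real k + 1) \<longrightarrow> 0 \<le> Q \<longrightarrow> \<bar>Q - R\<bar> \<le> 10 * (l + 1)"
        using kl R0 l0 by (auto simp: R_def abs_le_iff)
      ultimately have "\<bar>8 * (real k + 1) * (s k)\<^sup>2 - R\<bar> \<le> 10 * (l + 1)" by blast
      hence "\<bar>AA a k * (8 * (real k + 1) * (s k)\<^sup>2 - R)\<bar> \<le> \<delta>\<^sup>2 * (10 * (l + 1))"
        unfolding abs_mult using A Ad by (intro mult_mono) auto
      hence "\<bar>AA a k * (8 * (real k + 1) * (s k)\<^sup>2 - R)\<bar> \<le> 10 * \<delta>\<^sup>2 * (l + 1)"
        by (simp add: algebra_simps)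
      moreover have "(if real k < l then 10 * \<delta>\<^sup>2 * (l + 1) else 0) = 10 * \<delta>\<^sup>2 * (l + 1)" using kl by simp
      ultimately show ?thesis using ext by linarith
    next
      case False
      hence px: "phi k \<le> x" by simp
      define T where "T = sqrt (log 2 (2/x)) / (2 * sqrt (real k + 1))"
      have st: "\<bar>s k - T\<bar> \<le> \<eta>" using sapp k px by (auto simp: T_def)
      have lg0: "0 \<le> log 2 (2/x)" using x by simp
      have lg1: "log 2 (2/x) \<le> real k + 1" using L3[OF x(1) px] .
      have lgl: "log 2 (2/x) = 1 + l" using x l by (simp add: log_divide)
      have T2: "T\<^sup>2 = log 2 (2/x) / (4 * (real k + 1))"
        using lg0 by (simp add: T_def power_divide power_mult_distrib)
      have T0: "0 \<le> T" using lg0 by (simp add: T_def)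
      have "T\<^sup>2 \<le> (real k + 1) / (4 * (real k + 1))" unfolding T2 using lg1 by (intro divide_right_mono) auto
      moreover have "(real k + 1) / (4 * (real k + 1)) = 1/4" by simp
      ultimately have "T\<^sup>2 \<le> 1/4" by linarith
      have T1: "T \<le> 1/2"
      proof (rule ccontr)
        assume "\<not> T \<le> 1/2"
        hence "(1/2::real)^2 < T^2" by (intro power_strict_mono) auto
        thus False using \<open>T\<^sup>2 \<le> 1/4\<close> by (simp add: power2_eq_square)
      qed
      have QR: "8 * (real k + 1) * T\<^sup>2 = R" using T2 lgl by (simp add: R_def field_simps)
      have "\<bar>(s k)\<^sup>2 - T\<^sup>2\<bar> = \<bar>s k - T\<bar> * \<bar>s k + T\<bar>"
        by (simp add: power2_eq_square abs_mult[symmetric] algebra_simps)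
      also have "\<dots> \<le> \<eta> * 2" using st sk T0 T1 eta by (intro mult_mono) auto
      finally have sT: "\<bar>(s k)\<^sup>2 - T\<^sup>2\<bar> \<le> 2 * \<eta>" by simp
      have "\<bar>8 * (real k + 1) * (s k)\<^sup>2 - R\<bar> = 8 * (real k + 1) * \<bar>(s k)\<^sup>2 - T\<^sup>2\<bar>"
      proof -
        have "8 * (real k + 1) * (s k)\<^sup>2 - R = 8 * (real k + 1) * ((s k)\<^sup>2 - T\<^sup>2)"
          unfolding QR[symmetric] by (simp add: algebra_simps)
        thus ?thesis by (simp add: abs_mult)
      qed
      also have "\<dots> \<le> 8 * (real k + 1) * (2 * \<eta>)" using sT by (intro mult_left_mono) auto
      finally have "\<bar>AA a k * (8 * (real k + 1) * (s k)\<^sup>2 - R)\<bar> \<le> AA a k * (8 * (real k + 1) * (2 * \<eta>))"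
        unfolding abs_mult using A by (intro mult_mono) auto
      hence "\<bar>AA a k * (8 * (real k + 1) * (s k)\<^sup>2 - R)\<bar> \<le> 16 * \<eta> * ((real k + 1) * AA a k)"
        by (simp add: algebra_simps)
      moreover have "0 \<le> (if real k < l then 10 * \<delta>\<^sup>2 * (l + 1) else 0)" using l0 by simp
      ultimately show ?thesis by linarith
    qed
  qed
  have eq: "(\<Sum>k=1..m. AA a k * (8 * (real k + 1) * (s k)\<^sup>2)) - R
      = (\<Sum>k=1..m. AA a k * (8 * (real k + 1) * (s k)\<^sup>2 - R)) - R * PP a m"
  proof -
    have "(\<Sum>k=1..m. AA a k * (8 * (real k + 1) * (s k)\<^sup>2 - R))
        = (\<Sum>k=1..m. AA a k * (8 * (real k + 1) * (s k)\<^sup>2)) - R * (\<Sum>k=1..m. AA a k)"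
      by (simp add: right_diff_distrib sum_subtractf sum_distrib_left mult.commute)
    moreover have "R * (\<Sum>k=1..m. AA a k) = R - R * PP a m" unfolding sum_AA by (simp add: right_diff_distrib)
    ultimately show ?thesis by linarith
  qed
  have "\<bar>(\<Sum>k=1..m. AA a k * (8 * (real k + 1) * (s k)\<^sup>2 - R))\<bar>
      \<le> (\<Sum>k=1..m. \<bar>AA a k * (8 * (real k + 1) * (s k)\<^sup>2 - R)\<bar>)" by (rule sum_abs)
  also have "\<dots> \<le> (\<Sum>k=1..m. (if real k < l then 10 * \<delta>\<^sup>2 * (l + 1) else 0) + 16 * \<eta> * ((real k + 1) * AA a k))"
    by (rule sum_mono) (rule trm)
  also have "\<dots> = (\<Sum>k=1..m. (if real k < l then 10 * \<delta>\<^sup>2 * (l + 1) else 0)) + 16 * \<eta> * (\<Sum>k=1..m. (real k + 1) * AA a k)"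
    by (simp add: sum.distrib sum_distrib_left)
  also have "\<dots> \<le> 10 * \<delta>\<^sup>2 * (l + 1) * l + 16 * \<eta> * (l + 4)"
  proof (rule add_mono)
    show "(\<Sum>k=1..m. (if real k < l then 10 * \<delta>\<^sup>2 * (l + 1) else 0)) \<le> 10 * \<delta>\<^sup>2 * (l + 1) * l"
      using count_le[where t=l and c="10 * \<delta>\<^sup>2 * (l + 1)" and m=m] l0 by simp
    show "16 * \<eta> * (\<Sum>k=1..m. (real k + 1) * AA a k) \<le> 16 * \<eta> * (l + 4)"
      using sum_kAA[OF x(1) d l l0 a01 ahigh] eta by (intro mult_left_mono) auto
  qed
  finally have main: "\<bar>(\<Sum>k=1..m. AA a k * (8 * (real k + 1) * (s k)\<^sup>2 - R))\<bar> \<le> 10 * \<delta>\<^sup>2 * (l + 1) * l + 16 * \<eta> * (l + 4)" .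
  have "\<bar>R * PP a m\<bar> = R * PP a m" using R0 P[of m] by simp
  thus ?thesis using main eq unfolding R_def[symmetric] by linarith
qed



lemma f_bound:
  fixes p :: real and n :: nat
  assumes p: "0 \<le> p" "p \<le> 1" and n: "1 \<le> n"
  shows "p * (1 - log 2 (sqrt p))\<^sup>2 \<le> p * (1 + log 2 (real n))\<^sup>2 + 25 / real n"
proof (cases "p = 0")
  case True thus ?thesis by simp
next
  case False
  define x where "x = sqrt p"
  have x0: "0 < x" "x \<le> 1" using p False by (auto simp: x_def)
  have px: "p = x\<^sup>2" using p by (simp add: x_def)
  define l where "l = - log 2 x"
  have l0: "0 \<le> l" using x0 by (simp add: l_def)
  have n0: "0 < real n" using n by simp
  have eq: "1 - log 2 (sqrt p) = 1 + l" by (simp add: l_def x_def)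
  have z: "0 \<le> 25 / real n" by simp
  show ?thesis
  proof (cases "1 / real n \<le> x")
    case True
    have "log 2 (1 / real n) \<le> log 2 x" using True n0 x0 by simp
    hence "l \<le> log 2 (real n)" using n0 by (simp add: l_def log_divide)
    hence "(1 + l)\<^sup>2 \<le> (1 + log 2 (real n))\<^sup>2" using l0 by (intro power_mono) auto
    hence "p * (1 + l)\<^sup>2 \<le> p * (1 + log 2 (real n))\<^sup>2" using p by (intro mult_left_mono) auto
    thus ?thesis unfolding eq using z by linarith
  next
    case False
    hence xn: "x < 1 / real n" by simp
    define y where "y = sqrt x"
    have y0: "0 < y" "y \<le> 1" using x0 by (auto simp: y_def)
    have xy: "x = y\<^sup>2" using x0 by (simp add: y_def)
    have "log 2 x = 2 * log 2 y" using y0 by (simp add: xy log_nat_power)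
    hence "x * l = 2 * y * (y * (- log 2 y))" by (simp add: l_def xy power2_eq_square)
    also have "\<dots> \<le> 2 * y * 2" using ylogy[OF y0] y0 by (intro mult_left_mono) auto
    finally have xl: "x * l \<le> 4 * y" by simp
    have "x \<le> y" using y0 by (simp add: xy power2_eq_square mult_left_le)
    hence h: "x * (1 + l) \<le> 5 * y" using xl by (simp add: algebra_simps)
    have h0: "0 \<le> x * (1 + l)" using x0 l0 by simp
    have "p * (1 + l)\<^sup>2 = (x * (1 + l))\<^sup>2" by (simp add: px power_mult_distrib)
    also have "\<dots> \<le> (5 * y)\<^sup>2" using h h0 by (intro power_mono) auto
    also have "\<dots> = 25 * x" by (simp add: xy power_mult_distrib)
    also have "\<dots> \<le> 25 / real n" using xn by (simp add: field_simps)
    finally have "p * (1 + l)\<^sup>2 \<le> 25 / real n" .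
    moreover have "0 \<le> p * (1 + log 2 (real n))\<^sup>2" using p by simp
    ultimately show ?thesis unfolding eq by linarith
  qed
qed

lemma fsum:
  fixes p :: "nat \<Rightarrow> real" and n :: nat
  assumes p: "\<forall>i\<in>{1..n}. 0 \<le> p i" and s: "(\<Sum>i=1..n. p i) = 1"
  shows "(\<Sum>i=1..n. p i * (1 - log 2 (sqrt (p i)))\<^sup>2) \<le> 26 * (1 + log 2 (real n))\<^sup>2"
proof -
  have n: "1 \<le> n" using s by (cases n) auto
  have ple: "p i \<le> 1" if "i \<in> {1..n}" for i
  proof -
    have "p i \<le> (\<Sum>i=1..n. p i)" using p that by (intro member_le_sum) auto
    thus ?thesis using s by simp
  qed
  have "(\<Sum>i=1..n. p i * (1 - log 2 (sqrt (p i)))\<^sup>2) \<le> (\<Sum>i=1..n. p i * (1 + log 2 (real n))\<^sup>2 + 25 / real n)"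
    using p ple n by (intro sum_mono f_bound) auto
  also have "\<dots> = (1 + log 2 (real n))\<^sup>2 + 25"
  proof -
    have s': "(\<Sum>i=Suc 0..n. p i) = 1" using s by simp
    show ?thesis using n by (simp add: sum.distrib sum_distrib_right[symmetric] s')
  qed
  also have "\<dots> \<le> 26 * (1 + log 2 (real n))\<^sup>2"
  proof -
    have "1 \<le> (1 + log 2 (real n))\<^sup>2" using n by (simp add: one_le_power)
    thus ?thesis by simp
  qed
  finally show ?thesis .
qed



lemma per_i:
  fixes a s :: "nat \<Rightarrow> real" and p \<delta> \<eta> :: real and m :: nat
  assumes p: "0 \<le> p" "p \<le> 1" and m: "1 \<le> m" and eta: "0 \<le> \<eta>" and d: "\<delta>\<^sup>2 \<le> 1/2"
  and a01: "\<forall>j\<in>{1..m}. 0 \<le> a j \<and> a j \<le> 1"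
  and alow: "\<forall>j\<in>{1..m}. sqrt p \<le> phi j \<longrightarrow> a j \<le> \<delta>\<^sup>2"
  and ahigh: "\<forall>j\<in>{1..m}. 2*phi j \<le> sqrt p \<longrightarrow> a j \<ge> 1 - \<delta>\<^sup>2"
  and s1: "\<forall>k\<in>{1..m}. \<bar>s k\<bar> \<le> 1"
  and sapp: "\<forall>k\<in>{1..m}. phi k \<le> sqrt p \<longrightarrow> \<bar>s k - sqrt (log 2 (2 / sqrt p)) / (2 * sqrt (real k + 1))\<bar> \<le> \<eta>"
  shows "\<bar>p * (\<Sum>k=1..m. AA a k * (8 * (real k + 1) * (s k)\<^sup>2)) - 2 * p + p * log 2 p\<bar>
          \<le> (12 * \<delta>\<^sup>2 + 64 * \<eta>) * (p * (1 - log 2 (sqrt p))\<^sup>2) + 12 / 2 ^ m"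
proof (cases "p = 0")
  case True
  have "0 \<le> 12 / (2::real) ^ m" by simp
  thus ?thesis using True by simp
next
  case False
  define x where "x = sqrt p"
  have x0: "0 < x" "x \<le> 1" using p False by (auto simp: x_def)
  have px: "p = x\<^sup>2" using p by (simp add: x_def)
  define l where "l = - log 2 x"
  have l0: "0 \<le> l" using x0 by (simp add: l_def)
  define E where "E = (\<Sum>k=1..m. AA a k * (8 * (real k + 1) * (s k)\<^sup>2))"
  have lp: "log 2 p = - 2 * l" using x0 by (simp add: px l_def log_nat_power)
  have eq1: "p * E - 2 * p + p * log 2 p = p * (E - (2 + 2 * l))" by (simp add: lp algebra_simps)
  have P: "0 \<le> PP a m \<and> PP a m \<le> 1" using PP_bounds[OF a01, of m] by simp
  have core': "\<bar>E - (2 + 2*l)\<bar> \<le> 10 * \<delta>\<^sup>2 * (l + 1) * l + 16 * \<eta> * (l + 4) + (2 + 2*l) * PP a m"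
    unfolding E_def
    by (rule core[OF x0 eta d l_def a01]) (use alow ahigh s1 sapp in \<open>auto simp: x_def\<close>)
  have pm: "p * ((2 + 2*l) * PP a m) \<le> 2 * \<delta>\<^sup>2 * (p * (1 + l)) + 12 / 2 ^ m"
  proof (cases "2 * phi m \<le> x")
    case True
    hence "a m \<ge> 1 - \<delta>\<^sup>2" using ahigh m by (auto simp: x_def)
    moreover have "PP a m = PP a (m-1) * (1 - a m)" using m by (rule PP_rec)
    moreover have "0 \<le> PP a (m-1) \<and> PP a (m-1) \<le> 1" using PP_bounds[OF a01, of "m-1"] by simp
    moreover have "0 \<le> 1 - a m" using a01 m by auto
    ultimately have "PP a m \<le> \<delta>\<^sup>2" by (smt (verit) mult_left_le_one_le)
    hence "p * ((2 + 2*l) * PP a m) \<le> p * ((2 + 2*l) * \<delta>\<^sup>2)"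
      using p l0 by (intro mult_left_mono) auto
    moreover have "0 \<le> 12 / (2::real) ^ m" by simp
    moreover have "p * ((2 + 2*l) * \<delta>\<^sup>2) = 2 * \<delta>\<^sup>2 * (p * (1 + l))" by (simp add: algebra_simps)
    ultimately show ?thesis by linarith
  next
    case False
    hence xs: "x < 2 / 2 ^ m" by (simp add: phi_def power_one_over)
    have xl: "x * l \<le> 2" using ylogy[OF x0] by (simp add: l_def)
    have "p * (2 + 2 * l) = x * (2 * x + 2 * (x * l))" by (simp add: px power2_eq_square algebra_simps)
    also have "\<dots> \<le> x * 6" using xl x0 by (intro mult_left_mono) auto
    also have "\<dots> \<le> (2 / 2 ^ m) * 6" using xs by simp
    finally have h: "p * (2 + 2 * l) \<le> 12 / 2 ^ m" by simp
    have "p * ((2 + 2*l) * PP a m) \<le> p * (2 + 2 * l)"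
      using P p l0 by (intro mult_left_mono mult_right_le_one_le) auto
    moreover have "0 \<le> 2 * \<delta>\<^sup>2 * (p * (1 + l))" using p l0 by simp
    ultimately show ?thesis using h by linarith
  qed
  have "\<bar>p * E - 2 * p + p * log 2 p\<bar> = p * \<bar>E - (2 + 2 * l)\<bar>" using p by (simp add: eq1 abs_mult)
  also have "\<dots> \<le> p * (10 * \<delta>\<^sup>2 * (l + 1) * l + 16 * \<eta> * (l + 4) + (2 + 2*l) * PP a m)"
    using core' p by (intro mult_left_mono) auto
  also have "\<dots> = p * (10 * \<delta>\<^sup>2 * (l + 1) * l + 16 * \<eta> * (l + 4)) + p * ((2 + 2*l) * PP a m)"
    by (simp add: algebra_simps)
  also have "\<dots> \<le> p * (10 * \<delta>\<^sup>2 * (l + 1) * l + 16 * \<eta> * (l + 4)) + (2 * \<delta>\<^sup>2 * (p * (1 + l)) + 12 / 2 ^ m)"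
    using pm by simp
  also have "\<dots> = p * (\<delta>\<^sup>2 * (10 * (l + 1) * l + 2 * (1 + l)) + \<eta> * (16 * (l + 4))) + 12 / 2 ^ m"
    by (simp add: algebra_simps)
  also have "\<dots> \<le> p * (\<delta>\<^sup>2 * (12 * (1 + l)\<^sup>2) + \<eta> * (64 * (1 + l)\<^sup>2)) + 12 / 2 ^ m"
  proof -
    have a1: "10 * (l + 1) * l + 2 * (1 + l) \<le> 12 * (1 + l)\<^sup>2" using l0 by (simp add: power2_eq_square algebra_simps)
    have a2: "16 * (l + 4) \<le> 64 * (1 + l)\<^sup>2" using l0 by (simp add: power2_eq_square algebra_simps)
    have "\<delta>\<^sup>2 * (10 * (l + 1) * l + 2 * (1 + l)) + \<eta> * (16 * (l + 4)) \<le> \<delta>\<^sup>2 * (12 * (1 + l)\<^sup>2) + \<eta> * (64 * (1 + l)\<^sup>2)"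
      using a1 a2 eta by (intro add_mono mult_left_mono) auto
    thus ?thesis using p by (simp add: mult_left_mono)
  qed
  also have "\<dots> = (12 * \<delta>\<^sup>2 + 64 * \<eta>) * (p * (1 - log 2 (sqrt p))\<^sup>2) + 12 / 2 ^ m"
    by (simp add: l_def x_def algebra_simps)
  finally show ?thesis unfolding E_def .
qed

lemma per_i_crude:
  fixes a s :: "nat \<Rightarrow> real" and p :: real and m :: nat
  assumes p: "0 \<le> p" "p \<le> 1"
  and a01: "\<forall>j\<in>{1..m}. 0 \<le> a j \<and> a j \<le> 1"
  and s1: "\<forall>k\<in>{1..m}. \<bar>s k\<bar> \<le> 1"
  shows "\<bar>p * (\<Sum>k=1..m. AA a k * (8 * (real k + 1) * (s k)\<^sup>2)) - 2 * p + p * log 2 p\<bar>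
          \<le> 8 * (real m + 1) * p + 2 * (p * (1 - log 2 (sqrt p))\<^sup>2)"
proof (cases "p = 0")
  case True
  thus ?thesis by simp
next
  case False
  define x where "x = sqrt p"
  have x0: "0 < x" "x \<le> 1" using p False by (auto simp: x_def)
  have px: "p = x\<^sup>2" using p by (simp add: x_def)
  define l where "l = - log 2 x"
  have l0: "0 \<le> l" using x0 by (simp add: l_def)
  define E where "E = (\<Sum>k=1..m. AA a k * (8 * (real k + 1) * (s k)\<^sup>2))"
  have lp: "log 2 p = - 2 * l" using x0 by (simp add: px l_def log_nat_power)
  have eq1: "p * E - 2 * p + p * log 2 p = p * (E - (2 + 2 * l))" by (simp add: lp algebra_simps)
  have P: "0 \<le> PP a m \<and> PP a m \<le> 1" using PP_bounds[OF a01, of m] by simp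
  have tk: "0 \<le> AA a k * (8 * (real k + 1) * (s k)\<^sup>2) \<and> AA a k * (8 * (real k + 1) * (s k)\<^sup>2) \<le> AA a k * (8 * (real m + 1))"
    if k: "k \<in> {1..m}" for k
  proof -
    have A: "0 \<le> AA a k" using AA_bounds[OF a01] k by auto
    have "(s k)\<^sup>2 \<le> 1" using s1 k by (simp add: abs_square_le_1)
    hence "8 * (real k + 1) * (s k)\<^sup>2 \<le> 8 * (real m + 1)" using k
      by (smt (verit, best) mult_left_le of_nat_le_iff atLeastAtMost_iff zero_le_power2 mult_nonneg_nonneg of_nat_0_le_iff)
    thus ?thesis using A by (simp add: mult_left_mono)
  qed
  have E0: "0 \<le> E" unfolding E_def using tk by (intro sum_nonneg) auto
  have "E \<le> (\<Sum>k=1..m. AA a k * (8 * (real m + 1)))" unfolding E_def using tk by (intro sum_mono) auto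
  also have "\<dots> = (1 - PP a m) * (8 * (real m + 1))" using sum_AA[where a=a and m=m] by (simp add: sum_distrib_right[symmetric])
  also have "\<dots> \<le> 8 * (real m + 1)" using P by (simp add: mult_left_le_one_le)
  finally have E1: "E \<le> 8 * (real m + 1)" .
  have "\<bar>E - (2 + 2 * l)\<bar> \<le> 8 * (real m + 1) + 2 * (1 + l)\<^sup>2"
  proof -
    have "2 + 2 * l \<le> 2 * (1 + l)\<^sup>2" using l0 by (simp add: power2_eq_square algebra_simps)
    thus ?thesis using E0 E1 l0 by (simp add: abs_le_iff)
  qed
  hence h1: "p * \<bar>E - (2 + 2 * l)\<bar> \<le> p * (8 * (real m + 1) + 2 * (1 + l)\<^sup>2)" using p by (intro mult_left_mono) auto
  have h2: "\<bar>p * E - 2 * p + p * log 2 p\<bar> = p * \<bar>E - (2 + 2 * l)\<bar>" using p by (simp add: eq1 abs_mult)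
  have eqs: "1 - log 2 (sqrt p) = 1 + l" by (simp add: l_def x_def)
  have h3: "p * (8 * (real m + 1) + 2 * (1 + l)\<^sup>2) = 8 * (real m + 1) * p + 2 * (p * (1 - log 2 (sqrt p))\<^sup>2)"
    unfolding eqs by (simp add: algebra_simps)
  show ?thesis unfolding E_def[symmetric] using h1 h2 h3 by linarith
qed



lemma main_bound:
  fixes n m :: nat and p :: "nat \<Rightarrow> real" and \<delta> \<eta> :: real
    and beta beta' :: "nat \<Rightarrow> real \<Rightarrow> real" and S :: "nat \<Rightarrow> real poly"
  assumes p0: "\<forall>i\<in>{1..n}. p i \<ge> 0" and ps: "(\<Sum>i=1..n. p i) = 1" and m2: "m \<ge> 2"
    and d0: "\<delta> > 0" and e0: "\<eta> > 0"
    and hb: "\<forall>j\<in>{1..m}. \<forall>x\<in>{0..1}.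
        (beta j x)\<^sup>2 + (beta' j x)\<^sup>2 = 1 \<and>
        (x \<le> phi j \<longrightarrow> (beta j x)\<^sup>2 \<le> \<delta>\<^sup>2) \<and>
        (2 * phi j \<le> x \<longrightarrow> (beta j x)\<^sup>2 \<ge> 1 - \<delta>\<^sup>2)"
    and hS: "\<forall>k\<in>{1..m}. even_poly (S k) \<and>
        (\<forall>x\<in>{-1..1}. \<bar>poly (S k) x\<bar> \<le> 1) \<and>
        (\<forall>x\<in>{phi k..1}. \<bar>poly (S k) x - sqrt (log 2 (2 / x)) / (2 * sqrt (log 2 (1 / phi (k+1))))\<bar> \<le> \<eta>)"
  shows "\<bar>vest n m p S beta beta' - entropy n p\<bar>
          \<le> 10000 * (log 2 (2 + real n + real m + 1/\<delta> + 1/\<eta>)) ^ 2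
              * (real m * \<delta>\<^sup>2 + \<eta> + real n / 2 ^ m)"
proof -
  have n1: "1 \<le> n" using ps by (cases n) auto
  have ps': "(\<Sum>i=Suc 0..n. p i) = 1" using ps by simp
  have ple: "p i \<le> 1" if "i \<in> {1..n}" for i
  proof -
    have "p i \<le> (\<Sum>i=1..n. p i)" using p0 that by (intro member_le_sum) auto
    thus ?thesis using ps by simp
  qed
  define a where "a i = (\<lambda>j. (beta j (sqrt (p i)))\<^sup>2)" for i
  define s where "s i = (\<lambda>k. poly (S k) (sqrt (p i)))" for i
  define G where "G i = (\<Sum>k=1..m. AA (a i) k * (8 * (real k + 1) * (s i k)\<^sup>2))" for i
  define D where "D i = p i * G i - 2 * p i + p i * log 2 (p i)" for i
  have xin: "sqrt (p i) \<in> {0..1}" if "i \<in> {1..n}" for i using p0 ple[OF that] that by auto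
  have Bsq: "(Bfun beta beta' k (sqrt (p i)))\<^sup>2 = AA (a i) k" if i: "i \<in> {1..n}" and k: "k \<in> {1..m}" for i k
  proof -
    have "(Bprime beta' (k-1) (sqrt (p i)))\<^sup>2 = (\<Prod>j=1..k-1. (beta' j (sqrt (p i)))\<^sup>2)"
      by (simp add: Bprime_def prod_power_distrib)
    also have "\<dots> = (\<Prod>j=1..k-1. 1 - a i j)"
    proof (rule prod.cong)
      fix j assume "j \<in> {1..k-1}"
      hence "j \<in> {1..m}" using k by auto
      hence "(beta j (sqrt (p i)))\<^sup>2 + (beta' j (sqrt (p i)))\<^sup>2 = 1" using hb xin[OF i] by blast
      thus "(beta' j (sqrt (p i)))\<^sup>2 = 1 - a i j" by (simp add: a_def)
    qed simp
    finally show ?thesis by (simp add: Bfun_def AA_def PP_def a_def power_mult_distrib)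
  qed
  have vk_eq: "8 * vk n p S beta beta' k = (\<Sum>i=1..n. p i * (AA (a i) k * (8 * (real k + 1) * (s i k)\<^sup>2)))"
    if k: "k \<in> {1..m}" for k
  proof -
    have "8 * vk n p S beta beta' k = (\<Sum>i=1..n. 8 * (p i * (poly (S k) (sqrt (p i)))\<^sup>2 * (Bfun beta beta' k (sqrt (p i)))\<^sup>2
                 * log 2 (1 / phi (k+1))))"
      by (simp add: vk_def sum_distrib_left)
    also have "\<dots> = (\<Sum>i=1..n. p i * (AA (a i) k * (8 * (real k + 1) * (s i k)\<^sup>2)))"
    proof (rule sum.cong)
      fix i assume i: "i \<in> {1..n}"
      have b: "(Bfun beta beta' k (sqrt (p i)))\<^sup>2 = AA (a i) k" by (rule Bsq[OF i k])
      have l: "log 2 (1 / phi (k+1)) = real k + 1" by (rule log_phi)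
      show "8 * (p i * (poly (S k) (sqrt (p i)))\<^sup>2 * (Bfun beta beta' k (sqrt (p i)))\<^sup>2
                 * log 2 (1 / phi (k+1))) = p i * (AA (a i) k * (8 * (real k + 1) * (s i k)\<^sup>2))"
        unfolding b l s_def by (simp add: algebra_simps)
    qed simp
    finally show ?thesis .
  qed
  have dec: "vest n m p S beta beta' - entropy n p = (\<Sum>i=1..n. D i)"
  proof -
    have "(\<Sum>k=1..m. 8 * vk n p S beta beta' k) = (\<Sum>k=1..m. \<Sum>i=1..n. p i * (AA (a i) k * (8 * (real k + 1) * (s i k)\<^sup>2)))"
      by (rule sum.cong) (auto simp: vk_eq)
    also have "\<dots> = (\<Sum>i=1..n. \<Sum>k=1..m. p i * (AA (a i) k * (8 * (real k + 1) * (s i k)\<^sup>2)))"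
      by (rule sum.swap)
    also have "\<dots> = (\<Sum>i=1..n. p i * G i)" by (simp add: G_def sum_distrib_left)
    finally have e1: "(\<Sum>k=1..m. 8 * vk n p S beta beta' k) = (\<Sum>i=1..n. p i * G i)" .
    have "(\<Sum>i=1..n. D i) = (\<Sum>i=1..n. p i * G i) - 2 * (\<Sum>i=1..n. p i) + (\<Sum>i=1..n. p i * log 2 (p i))"
      by (simp add: D_def sum.distrib sum_subtractf sum_distrib_left)
    thus ?thesis using e1 ps by (simp add: vest_def entropy_def)
  qed
  have cond: "(\<forall>j\<in>{1..m}. 0 \<le> a i j \<and> a i j \<le> 1) \<and>
      (\<forall>j\<in>{1..m}. sqrt (p i) \<le> phi j \<longrightarrow> a i j \<le> \<delta>\<^sup>2) \<and>
      (\<forall>j\<in>{1..m}. 2*phi j \<le> sqrt (p i) \<longrightarrow> a i j \<ge> 1 - \<delta>\<^sup>2) \<and>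
      (\<forall>k\<in>{1..m}. \<bar>s i k\<bar> \<le> 1) \<and>
      (\<forall>k\<in>{1..m}. phi k \<le> sqrt (p i) \<longrightarrow> \<bar>s i k - sqrt (log 2 (2 / sqrt (p i))) / (2 * sqrt (real k + 1))\<bar> \<le> \<eta>)"
    if i: "i \<in> {1..n}" for i
  proof (intro conjI ballI impI)
    fix j assume j: "j \<in> {1..m}"
    have h: "(beta j (sqrt (p i)))\<^sup>2 + (beta' j (sqrt (p i)))\<^sup>2 = 1"
      using hb j xin[OF i] by blast
    have z: "0 \<le> (beta' j (sqrt (p i)))\<^sup>2" by simp
    show "0 \<le> a i j" by (simp add: a_def)
    show "a i j \<le> 1" unfolding a_def using h z by linarith
  next
    fix j assume "j \<in> {1..m}" "sqrt (p i) \<le> phi j"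
    thus "a i j \<le> \<delta>\<^sup>2" using hb xin[OF i] by (auto simp: a_def)
  next
    fix j assume "j \<in> {1..m}" "2 * phi j \<le> sqrt (p i)"
    thus "a i j \<ge> 1 - \<delta>\<^sup>2" using hb xin[OF i] by (auto simp: a_def)
  next
    fix k assume "k \<in> {1..m}"
    moreover have "sqrt (p i) \<in> {-1..1}"
    proof -
      have a: "0 \<le> sqrt (p i)" "sqrt (p i) \<le> 1" using xin[OF i] by auto
      have b: "-1 \<le> sqrt (p i)" using a by linarith
      show ?thesis by (rule atLeastAtMost_iff[THEN iffD2, OF conjI[OF b a(2)]])
    qed
    ultimately show "\<bar>s i k\<bar> \<le> 1" using hS by (auto simp: s_def)
  next
    fix k assume k: "k \<in> {1..m}" and pk: "phi k \<le> sqrt (p i)"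
    have xk: "sqrt (p i) \<in> {phi k..1}" using pk xin[OF i] by auto
    have "\<forall>x\<in>{phi k..1}. \<bar>poly (S k) x - sqrt (log 2 (2 / x)) / (2 * sqrt (log 2 (1 / phi (k+1))))\<bar> \<le> \<eta>"
      using hS k by blast
    hence "\<bar>poly (S k) (sqrt (p i)) - sqrt (log 2 (2 / sqrt (p i))) / (2 * sqrt (log 2 (1 / phi (k+1))))\<bar> \<le> \<eta>"
      using xk by blast
    thus "\<bar>s i k - sqrt (log 2 (2 / sqrt (p i))) / (2 * sqrt (real k + 1))\<bar> \<le> \<eta>"
      unfolding log_phi s_def .
  qed
  define F where "F = (\<Sum>i=1..n. p i * (1 - log 2 (sqrt (p i)))\<^sup>2)"
  have F0: "0 \<le> F" unfolding F_def using p0 by (intro sum_nonneg) auto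
  have F1: "F \<le> 26 * (1 + log 2 (real n))\<^sup>2" unfolding F_def by (rule fsum[OF p0 ps])
  define Lg where "Lg = log 2 (2 + real n + real m + 1/\<delta> + 1/\<eta>)"
  have Z: "2 \<le> 2 + real n + real m + 1/\<delta> + 1/\<eta>" "real n \<le> 2 + real n + real m + 1/\<delta> + 1/\<eta>"
    using d0 e0 by auto
  have Lg1: "1 \<le> Lg" unfolding Lg_def using Z(1) by simp
  have Lgn: "log 2 (real n) \<le> Lg" unfolding Lg_def using Z(2) n1 by simp
  have ln0: "0 \<le> log 2 (real n)" using n1 by simp
  have "(1 + log 2 (real n))\<^sup>2 \<le> (2 * Lg)\<^sup>2" using Lg1 Lgn ln0 by (intro power_mono) auto
  hence F2: "F \<le> 104 * Lg\<^sup>2" using F1 by (simp add: power_mult_distrib)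
  define X where "X = Lg\<^sup>2"
  have X1: "1 \<le> X" unfolding X_def using Lg1 by (simp add: one_le_power)
  have m1: "1 \<le> m" using m2 by simp
  have absum: "\<bar>vest n m p S beta beta' - entropy n p\<bar> \<le> (\<Sum>i=1..n. \<bar>D i\<bar>)"
    unfolding dec by (rule sum_abs)
  have rhs: "10000 * Lg ^ 2 * (real m * \<delta>\<^sup>2 + \<eta> + real n / 2 ^ m)
      = 10000 * (X * (real m * \<delta>\<^sup>2)) + 10000 * (X * \<eta>) + 10000 * (X * (real n / 2 ^ m))"
    by (simp add: X_def algebra_simps)
  have nm0: "0 \<le> real n / 2 ^ m" by simp
  have md: "\<delta>\<^sup>2 \<le> real m * \<delta>\<^sup>2" using m1 by (simp add: mult_le_cancel_right1)
  show ?thesis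
  proof (cases "\<delta>\<^sup>2 \<le> 1/2")
    case True
    have "(\<Sum>i=1..n. \<bar>D i\<bar>) \<le> (\<Sum>i=1..n. (12 * \<delta>\<^sup>2 + 64 * \<eta>) * (p i * (1 - log 2 (sqrt (p i)))\<^sup>2) + 12 / 2 ^ m)"
    proof (rule sum_mono)
      fix i assume i: "i \<in> {1..n}"
      show "\<bar>D i\<bar> \<le> (12 * \<delta>\<^sup>2 + 64 * \<eta>) * (p i * (1 - log 2 (sqrt (p i)))\<^sup>2) + 12 / 2 ^ m"
        unfolding D_def G_def
        using per_i[of "p i" m \<eta> \<delta> "a i" "s i"] cond[OF i] p0 i ple[OF i] m1 e0 True by auto
    qed
    also have "\<dots> = (12 * \<delta>\<^sup>2 + 64 * \<eta>) * F + 12 * (real n / 2 ^ m)"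
      by (simp add: F_def sum.distrib sum_distrib_left)
    also have "\<dots> \<le> (12 * \<delta>\<^sup>2 + 64 * \<eta>) * (104 * X) + 12 * (real n / 2 ^ m)"
      using F2 e0 by (simp add: X_def mult_left_mono)
    also have "\<dots> = 1248 * (X * \<delta>\<^sup>2) + 6656 * (X * \<eta>) + 12 * (real n / 2 ^ m)"
      by (simp add: algebra_simps)
    also have "\<dots> \<le> 10000 * Lg ^ 2 * (real m * \<delta>\<^sup>2 + \<eta> + real n / 2 ^ m)"
    proof -
      have "X * \<delta>\<^sup>2 \<le> X * (real m * \<delta>\<^sup>2)" using md X1 by (intro mult_left_mono) auto
      moreover have "real n / 2 ^ m \<le> X * (real n / 2 ^ m)"
        using mult_right_mono[OF X1 nm0] by simp
      moreover have "0 \<le> X * \<eta>" "0 \<le> X * \<delta>\<^sup>2" using X1 e0 by auto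
      ultimately show ?thesis unfolding rhs using nm0 by linarith
    qed
    finally show ?thesis using absum unfolding Lg_def by linarith
  next
    case False
    have "(\<Sum>i=1..n. \<bar>D i\<bar>) \<le> (\<Sum>i=1..n. 8 * (real m + 1) * p i + 2 * (p i * (1 - log 2 (sqrt (p i)))\<^sup>2))"
    proof (rule sum_mono)
      fix i assume i: "i \<in> {1..n}"
      show "\<bar>D i\<bar> \<le> 8 * (real m + 1) * p i + 2 * (p i * (1 - log 2 (sqrt (p i)))\<^sup>2)"
        unfolding D_def G_def
        using per_i_crude[of "p i" m "a i" "s i"] cond[OF i] p0 i ple[OF i] by auto
    qed
    also have "\<dots> = 8 * (real m + 1) + 2 * F"
      by (simp add: F_def sum.distrib sum_distrib_left[symmetric] ps ps')
    also have "\<dots> \<le> 10000 * Lg ^ 2 * (real m * \<delta>\<^sup>2 + \<eta> + real n / 2 ^ m)"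
    proof -
      have h0: "real m * (1/2) \<le> real m * \<delta>\<^sup>2" using False by (intro mult_left_mono) auto
      have h: "real m / 2 \<le> real m * \<delta>\<^sup>2" using h0 by simp
      have mr: "2 \<le> real m" using m2 by simp
      have md1: "1 \<le> real m * \<delta>\<^sup>2" using h mr by linarith
      have "1 * (real m * \<delta>\<^sup>2) \<le> X * (real m * \<delta>\<^sup>2)" using X1 md1 by (intro mult_right_mono) auto
      hence "real m * \<delta>\<^sup>2 \<le> X * (real m * \<delta>\<^sup>2)" by simp
      hence "8 * (real m + 1) \<le> 32 * (X * (real m * \<delta>\<^sup>2))" using h mr by argo
      moreover have "2 * F \<le> 208 * (X * (real m * \<delta>\<^sup>2))"
      proof -
        have "X \<le> X * (real m * \<delta>\<^sup>2)" using md1 X1 by (simp add: mult_le_cancel_left1)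
        thus ?thesis using F2 unfolding X_def by linarith
      qed
      moreover have "0 \<le> X * \<eta>" "0 \<le> X * (real n / 2 ^ m)" "0 \<le> X * (real m * \<delta>\<^sup>2)"
        using X1 e0 nm0 md1 by auto
      ultimately show ?thesis unfolding rhs by linarith
    qed
    finally show ?thesis using absum unfolding Lg_def by linarith
  qed
qed


theorem theorem3:
  "\<exists>C::real. \<exists>c::nat. \<forall>(n::nat) (m::nat) (p::nat \<Rightarrow> real) (\<delta>::real) (\<eta>::real)
      (beta::nat \<Rightarrow> real \<Rightarrow> real) (beta'::nat \<Rightarrow> real \<Rightarrow> real) (S::nat \<Rightarrow> real poly).
    (\<forall>i\<in>{1..n}. p i \<ge> 0) \<and> (\<Sum>i=1..n. p i) = 1 \<and> m \<ge> 2 \<and> \<delta> > 0 \<and> \<eta> > 0 \<and>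
    (\<forall>j\<in>{1..m}. \<forall>x\<in>{0..1}.
        (beta j x)\<^sup>2 + (beta' j x)\<^sup>2 = 1 \<and>
        (x \<le> phi j \<longrightarrow> (beta j x)\<^sup>2 \<le> \<delta>\<^sup>2) \<and>
        (2 * phi j \<le> x \<longrightarrow> (beta j x)\<^sup>2 \<ge> 1 - \<delta>\<^sup>2)) \<and>
    (\<forall>k\<in>{1..m}. even_poly (S k) \<and>
        (\<forall>x\<in>{-1..1}. \<bar>poly (S k) x\<bar> \<le> 1) \<and>
        (\<forall>x\<in>{phi k..1}. \<bar>poly (S k) x - sqrt (log 2 (2 / x)) / (2 * sqrt (log 2 (1 / phi (k+1))))\<bar> \<le> \<eta>))
    \<longrightarrow> \<bar>vest n m p S beta beta' - entropy n p\<bar>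
          \<le> C * (log 2 (2 + real n + real m + 1/\<delta> + 1/\<eta>)) ^ c
              * (real m * \<delta>\<^sup>2 + \<eta> + real n / 2 ^ m)"
proof (intro exI[of _ "10000::real"] exI[of _ "2::nat"] allI impI)
  fix n m :: nat and p :: "nat \<Rightarrow> real" and \<delta> \<eta> :: real
    and beta beta' :: "nat \<Rightarrow> real \<Rightarrow> real" and S :: "nat \<Rightarrow> real poly"
  assume H: "(\<forall>i\<in>{1..n}. p i \<ge> 0) \<and> (\<Sum>i=1..n. p i) = 1 \<and> m \<ge> 2 \<and> \<delta> > 0 \<and> \<eta> > 0 \<and>
    (\<forall>j\<in>{1..m}. \<forall>x\<in>{0..1}.
        (beta j x)\<^sup>2 + (beta' j x)\<^sup>2 = 1 \<and>
        (x \<le> phi j \<longrightarrow> (beta j x)\<^sup>2 \<le> \<delta>\<^sup>2) \<and>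
        (2 * phi j \<le> x \<longrightarrow> (beta j x)\<^sup>2 \<ge> 1 - \<delta>\<^sup>2)) \<and>
    (\<forall>k\<in>{1..m}. even_poly (S k) \<and>
        (\<forall>x\<in>{-1..1}. \<bar>poly (S k) x\<bar> \<le> 1) \<and>
        (\<forall>x\<in>{phi k..1}. \<bar>poly (S k) x - sqrt (log 2 (2 / x)) / (2 * sqrt (log 2 (1 / phi (k+1))))\<bar> \<le> \<eta>))"
  show "\<bar>vest n m p S beta beta' - entropy n p\<bar>
          \<le> 10000 * (log 2 (2 + real n + real m + 1/\<delta> + 1/\<eta>)) ^ 2
              * (real m * \<delta>\<^sup>2 + \<eta> + real n / 2 ^ m)"
    using H by (intro main_bound) auto
qed

end
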